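(* Let $E\subset\mathbb{R}^2$, $E_o:=\{(x,y)\in E:x\neq y\}$, and let $C$ be a connected component of $E_o$ containing no identifying cycles. Let $C^{\mathsf{x}}$ and $C^{\mathsf{y}}$ denote the projections of $C$ onto the first and second coordinate. (a) For any $v:C\to\mathbb{R}$ of the form $v(x,y)=h(x)(y-x)+g(y)$ on $C$, the portfolio positions of $v$ on $C$ are not unique at any point of $C$: for every $(x,y)\in C$ there exist two portfolio positions $(h,g),(\tilde h,\tilde g)$ of $v$ on $C$ with $h(x)\neq\tilde h(x)$ and $g(y)\neq\tilde g(y)$; and the set of portfolio positions of $v$ on $C$ (restricted to $C^{\mathsf{x}}\times C^{\mathsf{y}}$) is a one-parameter family. (b) Fix $(x_0,y_0)\in C$. There exist functions $a,b:\mathbb{R}\to\mathbb{R}\setminus\{0\}$ such that $a(x)b(y)=y-x$ for all $(x,y)\in C$ and $a(x_0)=1$, and these are unique on $C^{\mathsf{x}}$ and $C^{\mathsf{y}}$, respectively. Let $v_n(x,y)=h_n(x)(y-x)+g_n(y)$, with $h_n,g_n:\mathbb{R}\to\mathbb{R}$, converge pointwise on $C$ to $v:C\to\mathbb{R}$. Define $h'_n(x):=h_n(x)-h_n(x_0)/a(x)$ and $g'_n(y):=g_n(y)+h_n(x_0)b(y)$. Then $v_n(x,y)=h'_n(x)(y-x)+g'_n(y)$ on $C$, the pointwise limits $h':=\lim_n h'_n$ on $C^{\mathsf{x}}$ and $g':=\lim_n g'_n$ on $C^{\mathsf{y}}$ exist, and $v(x,y)=h'(x)(y-x)+g'(y)$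 for all $(x,y)\in C$. In particular, semistatic strategies on $C$ are closed under pointwise convergence.
   Context: A portfolio position of $v$ on $C$ is a pair $h,g:\mathbb{R}\to\mathbb{R}$ with $v(x,y)=h(x)(y-x)+g(y)$ for all $(x,y)\in C$. A path in $E_o$ from $(x,y)\in E_o$ to $(x',y')\in E_o$ is a tuple $(x_i,y_i)_{i=1}^k\in E_o^k$, $k\in\mathbb{N}_0$, such that all points $(x,y),(x_1,y),(x_1,y_1),(x_2,y_1),\dots,(x_k,y_k),(x',y_k),(x',y')$ belong to $E_o$. Points are connected if there is a path between them; this is an equivalence relation on $E_o$ whose equivalence classes are the connected components. A cycle is a path from a point to itself; a cycle $(x_i,y_i)_{i=1}^k$ is identifying if $\prod_{i=1}^k(y_i-x_i)-\prod_{i=1}^k(y_i-x_{i+1})\neq0$ with $x_{k+1}:=x_1$. *)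

theory Defs
  imports Complex_Main
begin

definition Eo :: "(real \<times> real) set \<Rightarrow> (real \<times> real) set" where
  "Eo E = {p \<in> E. fst p \<noteq> snd p}"

text \<open>epath S p ps q: the tuple ps is a path in S from p to q, i.e. all points
  (x,y),(x1,y),(x1,y1),(x2,y1),...,(xk,yk),(x',yk),(x',y') lie in S.\<close>
fun epath :: "(real \<times> real) set \<Rightarrow> real \<times> real \<Rightarrow> (real \<times> real) list \<Rightarrow> real \<times> real \<Rightarrow> bool" where
  "epath S (x, y) [] (x', y') = ((x, y) \<in> S \<and> (x', y) \<in> S \<and> (x', y') \<in> S)"
| "epath S (x, y) ((a, b) # ps) q = ((x, y) \<in> S \<and> (a, y) \<in> S \<and> set ((a, b) # ps) \<subseteq> S \<and> epath S (a, b) ps q)"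

definition path_connected_pts :: "(real \<times> real) set \<Rightarrow> real \<times> real \<Rightarrow> real \<times> real \<Rightarrow> bool" where
  "path_connected_pts S p q = (\<exists>ps. epath S p ps q)"

definition is_component :: "(real \<times> real) set \<Rightarrow> (real \<times> real) set \<Rightarrow> bool" where
  "is_component E C = (\<exists>p \<in> Eo E. C = {q \<in> Eo E. path_connected_pts (Eo E) p q})"

definition is_cycle :: "(real \<times> real) set \<Rightarrow> (real \<times> real) list \<Rightarrow> bool" where
  "is_cycle S ps = (ps \<noteq> [] \<and> epath S (hd ps) ps (hd ps))"

definition identifying :: "(real \<times> real) list \<Rightarrow> bool" where
  "identifying ps = (let k = length ps in
     (\<Prod>i<k. snd (ps ! i) - fst (ps ! i)) - (\<Prod>i<k. snd (ps ! i) - fst (ps ! ((i + 1) mod k))) \<noteq> 0)"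

definition portfolio_position :: "(real \<times> real) set \<Rightarrow> (real \<times> real \<Rightarrow> real) \<Rightarrow> (real \<Rightarrow> real) \<Rightarrow> (real \<Rightarrow> real) \<Rightarrow> bool" where
  "portfolio_position C v h g = (\<forall>(x, y) \<in> C. v (x, y) = h x * (y - x) + g y)"

end

theory Submission
  imports Defs
begin

fun chv :: "(real \<times> real) set \<Rightarrow> real \<Rightarrow> (real \<times> real) list \<Rightarrow> bool" where
  "chv C s [] = True"
| "chv C s ((w, u) # r) = ((s, w) \<in> C \<and> (u, w) \<in> C \<and> chv C u r)"

fun endp :: "real \<Rightarrow> (real \<times> real) list \<Rightarrow> real" where
  "endp s [] = s"
| "endp s ((w, u) # r) = endp u r"

fun ratio :: "real \<Rightarrow> (real \<times> real) list \<Rightarrow> real" where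
  "ratio s [] = 1"
| "ratio s ((w, u) # r) = (w - u) / (w - s) * ratio u r"

fun revc :: "real \<Rightarrow> (real \<times> real) list \<Rightarrow> (real \<times> real) list" where
  "revc s [] = []"
| "revc s ((w, u) # r) = revc u r @ [(w, s)]"

fun topairs :: "real \<Rightarrow> (real \<times> real) list \<Rightarrow> (real \<times> real) list" where
  "topairs s [] = []"
| "topairs s ((w, u) # r) = (s, w) # topairs u r"

lemma chv_append: "chv C s (c1 @ c2) = (chv C s c1 \<and> chv C (endp s c1) c2)"
  by (induction c1 arbitrary: s) auto

lemma endp_append: "endp s (c1 @ c2) = endp (endp s c1) c2"
  by (induction c1 arbitrary: s) auto

lemma ratio_append: "ratio s (c1 @ c2) = ratio s c1 * ratio (endp s c1) c2"
  by (induction c1 arbitrary: s) auto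

lemma revc_endp: "endp (endp s c) (revc s c) = s"
  by (induction c arbitrary: s) (auto simp: endp_append)

lemma revc_chv: "chv C s c \<Longrightarrow> chv C (endp s c) (revc s c)"
  by (induction c arbitrary: s) (auto simp: chv_append endp_append revc_endp)

lemma revc_length: "length (revc s c) = length c"
  by (induction c arbitrary: s) auto

lemma revc_ratio:
  assumes "chv C s c" "\<forall>p\<in>C. fst p \<noteq> snd p"
  shows "ratio (endp s c) (revc s c) * ratio s c = 1"
  using assms
proof (induction c arbitrary: s)
  case Nil then show ?case by simp
next
  case (Cons p r)
  obtain w u where p: "p = (w, u)" by fastforce
  have ne1: "w \<noteq> s" "w \<noteq> u" using Cons.prems p by fastforce+
  have IH: "ratio (endp u r) (revc u r) * ratio u r = 1" using Cons p by auto
  have "ratio (endp s (p # r)) (revc s (p # r)) * ratio s (p # r)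
     = (ratio (endp u r) (revc u r) * ratio u r) * ((w - s) / (w - u) * ((w - u) / (w - s)))"
    using p by (simp add: ratio_append revc_endp)
  also have "\<dots> = 1" using IH ne1 by simp
  finally show ?case .
qed

lemma ratio_nz: "chv C s c \<Longrightarrow> \<forall>p\<in>C. fst p \<noteq> snd p \<Longrightarrow> ratio s c \<noteq> 0"
proof (induction c arbitrary: s)
  case Nil then show ?case by simp
next
  case (Cons p r)
  obtain w u where p: "p = (w, u)" by fastforce
  then show ?case using Cons by fastforce
qed

lemma topairs_set: "chv C s c \<Longrightarrow> set (topairs s c) \<subseteq> C"
  by (induction c arbitrary: s) fastforce+

lemma topairs_length: "length (topairs s c) = length c"
  by (induction c arbitrary: s) auto

lemma topairs_nth: "j < length c \<Longrightarrow> topairs s c ! j = ((s # map snd c) ! j, fst (c ! j))"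
proof (induction c arbitrary: s j)
  case Nil then show ?case by simp
next
  case (Cons p r)
  obtain w u where p: "p = (w, u)" by fastforce
  show ?case using Cons p by (cases j) auto
qed

lemma endp_last: "endp s c = last (s # map snd c)"
  by (induction c arbitrary: s) auto

lemma Q1_ratio:
  assumes "chv C s c" "\<forall>p\<in>C. fst p \<noteq> snd p"
  shows "(\<Prod>i<length c. fst (c ! i) - (s # map snd c) ! i) * ratio s c
       = (\<Prod>i<length c. fst (c ! i) - snd (c ! i))"
  using assms
proof (induction c arbitrary: s)
  case Nil then show ?case by simp
next
  case (Cons p r)
  obtain w u where p: "p = (w, u)" by fastforce
  have ne1: "w \<noteq> s" using Cons.prems p by fastforce
  have IH: "(\<Prod>i<length r. fst (r ! i) - (u # map snd r) ! i) * ratio u r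
       = (\<Prod>i<length r. fst (r ! i) - snd (r ! i))" using Cons p by auto
  show ?case using p ne1 IH
    by (simp add: prod.lessThan_Suc_shift del: prod.lessThan_Suc)
qed

lemma epath_topairs:
  assumes "C \<subseteq> S" "chv C u r" "(x, y) \<in> C" "(u, y) \<in> C" "(endp u r, qy) \<in> C"
  shows "epath S (x, y) (topairs u r) (endp u r, qy)"
  using assms
proof (induction r arbitrary: x y u)
  case Nil then show ?case by auto
next
  case (Cons p r)
  obtain w u' where p: "p = (w, u')" by fastforce
  have "epath S (u, w) (topairs u' r) (endp u' r, qy)"
    using Cons p by auto
  then show ?case using Cons.prems p topairs_set[of C u' r] by auto
qed

lemma cycle_ratio:
  assumes sub: "C \<subseteq> S" and ch: "chv C s c" and e: "endp s c = s" and ne: "c \<noteq> []"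
    and offd: "\<forall>p\<in>C. fst p \<noteq> snd p"
    and noid: "\<forall>ps. set ps \<subseteq> C \<longrightarrow> is_cycle S ps \<longrightarrow> \<not> identifying ps"
  shows "ratio s c = 1"
proof -
  define ps where "ps = topairs s c"
  define k where "k = length c"
  have lk: "length ps = k" unfolding ps_def k_def by (simp add: topairs_length)
  have setps: "set ps \<subseteq> C" unfolding ps_def using ch by (rule topairs_set)
  obtain w u r where c: "c = (w, u) # r" using ne by (metis list.exhaust surj_pair)
  have sw: "(s, w) \<in> C" using ch c by auto
  have cyc: "is_cycle S ps"
  proof -
    have "epath S (s, w) (topairs s c) (endp s c, w)"
      using epath_topairs[OF sub ch sw sw] e sw by simp
    then show ?thesis unfolding is_cycle_def ps_def using c e by simp
  qed
  have nid: "\<not> identifying ps" using noid setps cyc by blast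
  have kpos: "k > 0" using ne k_def by simp
  have P1: "(\<Prod>i<k. snd (ps ! i) - fst (ps ! i)) = (\<Prod>i<k. fst (c ! i) - (s # map snd c) ! i)"
    by (rule prod.cong) (auto simp: ps_def k_def topairs_nth)
  have modl: "fst (ps ! ((i + 1) mod k)) = snd (c ! i)" if "i < k" for i
  proof (cases "i + 1 < k")
    case True
    then show ?thesis by (simp add: ps_def k_def topairs_nth)
  next
    case False
    then have "i + 1 = k" using that by simp
    then have "(i + 1) mod k = 0" by simp
    moreover have "snd (c ! i) = s"
    proof -
      have "s = last (s # map snd c)" using e endp_last by metis
      also have "\<dots> = last (map snd c)" using ne by simp
      also have "\<dots> = snd (c ! i)" proof -
        have "i = length c - 1" using `i + 1 = k` k_def by simp
        then show ?thesis using ne by (simp add: last_conv_nth)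
      qed
      finally show ?thesis by simp
    qed
    ultimately show ?thesis using kpos by (simp add: ps_def k_def topairs_nth)
  qed
  have P2: "(\<Prod>i<k. snd (ps ! i) - fst (ps ! ((i + 1) mod k))) = (\<Prod>i<k. fst (c ! i) - snd (c ! i))"
  proof (rule prod.cong)
    fix i assume "i \<in> {..<k}"
    then have "i < k" by simp
    moreover have "snd (ps ! i) = fst (c ! i)" using `i < k` by (simp add: ps_def k_def topairs_nth)
    ultimately show "snd (ps ! i) - fst (ps ! ((i + 1) mod k)) = fst (c ! i) - snd (c ! i)"
      using modl by simp
  qed simp
  have eq: "(\<Prod>i<k. snd (ps ! i) - fst (ps ! i)) = (\<Prod>i<k. snd (ps ! i) - fst (ps ! ((i + 1) mod k)))"
    using nid lk unfolding identifying_def Let_def by simp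
  have nz: "(\<Prod>i<k. snd (ps ! i) - fst (ps ! i)) \<noteq> 0"
  proof -
    have "\<forall>i<k. snd (ps ! i) - fst (ps ! i) \<noteq> 0"
      using setps offd lk by (metis nth_mem subsetD right_minus_eq)
    then show ?thesis by simp
  qed
  have "(\<Prod>i<k. fst (c ! i) - (s # map snd c) ! i) * ratio s c = (\<Prod>i<k. fst (c ! i) - (s # map snd c) ! i)"
    using Q1_ratio[OF ch offd] P1 P2 eq k_def by simp
  then show ?thesis using nz P1 by simp
qed


lemma epath_in: "epath S p ps q \<Longrightarrow> p \<in> S \<and> q \<in> S"
proof (induction ps arbitrary: p)
  case Nil then show ?case by (cases p; cases q) auto
next
  case (Cons a ps) then show ?case by (cases p; cases a) auto
qed

lemma epath_vert: "epath S p ps (a, b) \<Longrightarrow> (a, b') \<in> S \<Longrightarrow> epath S p ps (a, b')"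
proof (induction ps arbitrary: p)
  case Nil then show ?case by (cases p) auto
next
  case (Cons z ps) then show ?case by (cases p; cases z) auto
qed

lemma epath_horiz: "epath S p ps (a, b) \<Longrightarrow> (a', b) \<in> S \<Longrightarrow> epath S p (ps @ [(a, b)]) (a', b)"
proof (induction ps arbitrary: p)
  case Nil then show ?case by (cases p) auto
next
  case (Cons z ps)
  then show ?case using epath_in[OF Cons.prems(1)] by (cases p; cases z) auto
qed

lemma comp_props:
  assumes comp: "is_component E C"
  shows "C \<subseteq> Eo E" "\<forall>p\<in>C. fst p \<noteq> snd p"
    "\<And>x y y'. (x, y) \<in> C \<Longrightarrow> (x, y') \<in> Eo E \<Longrightarrow> (x, y') \<in> C"
    "\<And>x x' y. (x, y) \<in> C \<Longrightarrow> (x', y) \<in> Eo E \<Longrightarrow> (x', y) \<in> C"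
proof -
  obtain p where p: "p \<in> Eo E" and C: "C = {q \<in> Eo E. path_connected_pts (Eo E) p q}"
    using comp unfolding is_component_def by blast
  show "C \<subseteq> Eo E" using C by blast
  then show "\<forall>p\<in>C. fst p \<noteq> snd p" unfolding Eo_def by blast
  show "(x, y') \<in> C" if "(x, y) \<in> C" "(x, y') \<in> Eo E" for x y y'
    using that epath_vert unfolding C path_connected_pts_def by blast
  show "(x', y) \<in> C" if "(x, y) \<in> C" "(x', y) \<in> Eo E" for x x' y
    using that epath_horiz unfolding C path_connected_pts_def by blast
qed

lemma reach0:
  assumes comp: "is_component E C"
  shows "(x, y) \<in> C \<Longrightarrow> epath (Eo E) (x, y) ps q \<Longrightarrow> \<exists>c. chv C x c \<and> endp x c = fst q"
proof (induction ps arbitrary: x y)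
  case Nil
  obtain x' y' where q: "q = (x', y')" by fastforce
  have "(x', y) \<in> C" using Nil q comp_props(4)[OF comp] by auto
  then have "chv C x [(y, x')] \<and> endp x [(y, x')] = fst q" using Nil q by simp
  then show ?case by blast
next
  case (Cons z ps)
  obtain a b where z: "z = (a, b)" by fastforce
  have ay: "(a, y) \<in> C" using Cons z comp_props(4)[OF comp] by auto
  have ab: "(a, b) \<in> C" using Cons z comp_props(3)[OF comp, OF ay] by auto
  obtain c where c: "chv C a c" "endp a c = fst q" using Cons.IH[OF ab] Cons.prems z by auto
  have "chv C x ((y, a) # c) \<and> endp x ((y, a) # c) = fst q" using c Cons.prems ay by simp
  then show ?case by blast
qed

lemma reach:
  assumes comp: "is_component E C" and p0: "(x0, y0) \<in> C" and xy: "(x, y) \<in> C"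
  shows "\<exists>c. chv C x0 c \<and> endp x0 c = x"
proof -
  obtain p where p: "p \<in> Eo E" and C: "C = {q \<in> Eo E. path_connected_pts (Eo E) p q}"
    using comp unfolding is_component_def by blast
  obtain px py where pp: "p = (px, py)" by fastforce
  have "epath (Eo E) p [] p" using p pp by simp
  then have pC: "(px, py) \<in> C" using C p pp unfolding path_connected_pts_def by blast
  obtain c1 where c1: "chv C px c1" "endp px c1 = x0"
    using reach0[OF comp pC] p0 C pp unfolding path_connected_pts_def by fastforce
  obtain c2 where c2: "chv C px c2" "endp px c2 = x"
    using reach0[OF comp pC] xy C pp unfolding path_connected_pts_def by fastforce
  have "chv C x0 (revc px c1 @ c2) \<and> endp x0 (revc px c1 @ c2) = x"
    using revc_chv[OF c1(1)] revc_endp[of px c1] c1 c2 by (simp add: chv_append endp_append)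
  then show ?thesis by blast
qed

lemma chain_prop:
  assumes "\<And>x x' y. (x, y) \<in> C \<Longrightarrow> (x', y) \<in> C \<Longrightarrow> P x \<Longrightarrow> P x'"
  shows "chv C s c \<Longrightarrow> P s \<Longrightarrow> P (endp s c)"
proof (induction c arbitrary: s)
  case Nil then show ?case by simp
next
  case (Cons z r)
  obtain w u where z: "z = (w, u)" by fastforce
  then show ?case using Cons assms by auto
qed

lemma propagate:
  assumes comp: "is_component E C" and p0: "(x0, y0) \<in> C"
    and pres: "\<And>x x' y. (x, y) \<in> C \<Longrightarrow> (x', y) \<in> C \<Longrightarrow> P x \<Longrightarrow> P x'"
    and P0: "P x0" and x: "x \<in> fst ` C"
  shows "P x"
proof -
  obtain y where xy: "(x, y) \<in> C" using x by force
  obtain c where c: "chv C x0 c" "endp x0 c = x" using reach[OF comp p0 xy] by blast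
  have "P (endp x0 c)"
    apply (rule chain_prop[where C=C and P=P])
    using pres apply blast
    using c P0 by auto
  then show ?thesis using c by simp
qed

lemma ratio_wd:
  assumes comp: "is_component E C"
    and noid: "\<forall>ps. set ps \<subseteq> C \<longrightarrow> is_cycle (Eo E) ps \<longrightarrow> \<not> identifying ps"
    and c1: "chv C s c1" and c2: "chv C s c2" and e: "endp s c1 = endp s c2"
  shows "ratio s c1 = ratio s c2"
proof -
  note offd = comp_props(2)[OF comp]
  define cc where "cc = c1 @ revc s c2"
  have ch: "chv C s cc" unfolding cc_def using c1 revc_chv[OF c2] e by (simp add: chv_append)
  have ee: "endp s cc = s" unfolding cc_def using e revc_endp[of s c2] by (simp add: endp_append)
  have rr: "ratio (endp s c2) (revc s c2) * ratio s c2 = 1" using revc_ratio[OF c2 offd] .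
  show ?thesis
  proof (cases "cc = []")
    case True
    then have "c1 = []" "c2 = []" unfolding cc_def using revc_length[of s c2] by auto
    then show ?thesis by simp
  next
    case False
    have "ratio s cc = 1" using cycle_ratio[OF comp_props(1)[OF comp] ch ee False offd noid] .
    then have "ratio s c1 * ratio (endp s c2) (revc s c2) = 1"
      unfolding cc_def using e by (simp add: ratio_append)
    then have "ratio s c1 * ratio (endp s c2) (revc s c2) * ratio s c2 = ratio s c2" by simp
    then show ?thesis using rr by (simp add: mult.assoc)
  qed
qed

lemma factor_exists:
  assumes comp: "is_component E C"
    and noid: "\<forall>ps. set ps \<subseteq> C \<longrightarrow> is_cycle (Eo E) ps \<longrightarrow> \<not> identifying ps"
    and p0: "(x0, y0) \<in> C"
  shows "\<exists>a b :: real \<Rightarrow> real. (\<forall>x. a x \<noteq> 0) \<and> (\<forall>y. b y \<noteq> 0) \<and>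
            (\<forall>(x, y) \<in> C. a x * b y = y - x) \<and> a x0 = 1"
proof -
  note offd = comp_props(2)[OF comp]
  define R where "R x = (\<exists>c. chv C x0 c \<and> endp x0 c = x)" for x
  define a where "a x = (if R x then ratio x0 (SOME c. chv C x0 c \<and> endp x0 c = x) else 1)" for x
  have aeq: "a (endp x0 c) = ratio x0 c" if "chv C x0 c" for c
  proof -
    have R: "R (endp x0 c)" using that R_def by blast
    let ?c = "SOME c'. chv C x0 c' \<and> endp x0 c' = endp x0 c"
    have "chv C x0 ?c \<and> endp x0 ?c = endp x0 c" by (rule someI[of _ c]) (use that in simp)
    then have "ratio x0 ?c = ratio x0 c" using ratio_wd[OF comp noid] that by blast
    then show ?thesis using R a_def by simp
  qed
  have anz: "a x \<noteq> 0" for x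
  proof (cases "R x")
    case True
    then obtain c where "chv C x0 c" "endp x0 c = x" using R_def by blast
    then show ?thesis using aeq ratio_nz[OF _ offd] by metis
  qed (simp add: a_def)
  have key: "(y - x) / a x = (y - x') / a x'" if xy: "(x, y) \<in> C" and x'y: "(x', y) \<in> C" for x x' y
  proof -
    obtain c where c: "chv C x0 c" "endp x0 c = x" using reach[OF comp p0 xy] by blast
    have c': "chv C x0 (c @ [(y, x')])" using c xy x'y by (simp add: chv_append)
    have "a x' = a x * ((y - x') / (y - x))"
      using aeq[OF c'] aeq[OF c(1)] c by (simp add: endp_append ratio_append)
    moreover have "y \<noteq> x" "y \<noteq> x'" using xy x'y offd by fastforce+
    ultimately show ?thesis using anz[of x] anz[of x'] by (simp add: field_simps)
  qed
  define b where "b y = (if y \<in> snd ` C then (let x = (SOME x. (x, y) \<in> C) in (y - x) / a x) else 1)" for y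
  have beq: "b y = (y - x) / a x" if "(x, y) \<in> C" for x y
  proof -
    have y: "y \<in> snd ` C" using that by force
    have "(SOME x. (x, y) \<in> C, y) \<in> C" by (rule someI[of _ x]) (use that in simp)
    then show ?thesis using key[OF that] y unfolding b_def Let_def by simp
  qed
  have bnz: "b y \<noteq> 0" for y
  proof (cases "y \<in> snd ` C")
    case True
    then obtain x where xy: "(x, y) \<in> C" by force
    then have "y \<noteq> x" using offd by fastforce
    then show ?thesis using beq[OF xy] anz[of x] by simp
  qed (simp add: b_def)
  have "\<forall>(x, y) \<in> C. a x * b y = y - x" using beq anz by auto
  moreover have "a x0 = 1" using aeq[of "[]"] by simp
  ultimately show ?thesis using anz bnz by blast
qed


lemma comp_ne:
  assumes comp: "is_component E C"
  shows "\<exists>x0 y0. (x0, y0) \<in> C"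
proof -
  obtain p where p: "p \<in> Eo E" and C: "C = {q \<in> Eo E. path_connected_pts (Eo E) p q}"
    using comp unfolding is_component_def by blast
  obtain px py where pp: "p = (px, py)" by fastforce
  have "epath (Eo E) p [] p" using p pp by simp
  then have pC: "(px, py) \<in> C" using C p pp unfolding path_connected_pts_def by blast
  then show ?thesis by blast
qed

theorem proposition2p8:
  fixes E C :: "(real \<times> real) set"
  assumes comp: "is_component E C"
    and noid: "\<forall>ps. set ps \<subseteq> C \<longrightarrow> is_cycle (Eo E) ps \<longrightarrow> \<not> identifying ps"
  shows
    "(\<forall>v :: real \<times> real \<Rightarrow> real. (\<exists>h g. portfolio_position C v h g) \<longrightarrow>
        (\<forall>(x, y) \<in> C. \<exists>h g h' g'. portfolio_position C v h g \<and> portfolio_position C v h' g' \<and>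
                                   h x \<noteq> h' x \<and> g y \<noteq> g' y)
      \<and> (\<exists>h0 g0 \<alpha> \<beta> :: real \<Rightarrow> real.
           (\<forall>c. portfolio_position C v (\<lambda>x. h0 x + c * \<alpha> x) (\<lambda>y. g0 y + c * \<beta> y))
         \<and> (\<forall>h g. portfolio_position C v h g \<longrightarrow>
              (\<exists>!c. (\<forall>x \<in> fst ` C. h x = h0 x + c * \<alpha> x) \<and> (\<forall>y \<in> snd ` C. g y = g0 y + c * \<beta> y)))))
   \<and> (\<forall>x0 y0. (x0, y0) \<in> C \<longrightarrow>
        (\<exists>a b :: real \<Rightarrow> real. (\<forall>x. a x \<noteq> 0) \<and> (\<forall>y. b y \<noteq> 0) \<and>
            (\<forall>(x, y) \<in> C. a x * b y = y - x) \<and> a x0 = 1)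
      \<and> (\<forall>a b a' b' :: real \<Rightarrow> real.
            (\<forall>x. a x \<noteq> 0) \<and> (\<forall>y. b y \<noteq> 0) \<and> (\<forall>(x, y) \<in> C. a x * b y = y - x) \<and> a x0 = 1 \<and>
            (\<forall>x. a' x \<noteq> 0) \<and> (\<forall>y. b' y \<noteq> 0) \<and> (\<forall>(x, y) \<in> C. a' x * b' y = y - x) \<and> a' x0 = 1
            \<longrightarrow> (\<forall>x \<in> fst ` C. a' x = a x) \<and> (\<forall>y \<in> snd ` C. b' y = b y))
      \<and> (\<forall>(a :: real \<Rightarrow> real) (b :: real \<Rightarrow> real) (hn :: nat \<Rightarrow> real \<Rightarrow> real) (gn :: nat \<Rightarrow> real \<Rightarrow> real)
            (v :: real \<times> real \<Rightarrow> real).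
            (\<forall>x. a x \<noteq> 0) \<and> (\<forall>y. b y \<noteq> 0) \<and> (\<forall>(x, y) \<in> C. a x * b y = y - x) \<and> a x0 = 1 \<and>
            (\<forall>(x, y) \<in> C. (\<lambda>n. hn n x * (y - x) + gn n y) \<longlonglongrightarrow> v (x, y))
            \<longrightarrow> (let h'n = (\<lambda>n x. hn n x - hn n x0 / a x);
                     g'n = (\<lambda>n y. gn n y + hn n x0 * b y)
                 in (\<forall>n. \<forall>(x, y) \<in> C. hn n x * (y - x) + gn n y = h'n n x * (y - x) + g'n n y)
                  \<and> (\<exists>h' g' :: real \<Rightarrow> real.
                        (\<forall>x \<in> fst ` C. (\<lambda>n. h'n n x) \<longlonglongrightarrow> h' x)
                      \<and> (\<forall>y \<in> snd ` C. (\<lambda>n. g'n n y) \<longlonglongrightarrow> g' y)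
                      \<and> portfolio_position C v h' g'))))"
proof -
  note offd = comp_props(2)[OF comp]
  have partA: "(\<forall>v :: real \<times> real \<Rightarrow> real. (\<exists>h g. portfolio_position C v h g) \<longrightarrow>
        (\<forall>(x, y) \<in> C. \<exists>h g h' g'. portfolio_position C v h g \<and> portfolio_position C v h' g' \<and>
                                   h x \<noteq> h' x \<and> g y \<noteq> g' y)
      \<and> (\<exists>h0 g0 \<alpha> \<beta> :: real \<Rightarrow> real.
           (\<forall>c. portfolio_position C v (\<lambda>x. h0 x + c * \<alpha> x) (\<lambda>y. g0 y + c * \<beta> y))
         \<and> (\<forall>h g. portfolio_position C v h g \<longrightarrow>
              (\<exists>!c. (\<forall>x \<in> fst ` C. h x = h0 x + c * \<alpha> x) \<and> (\<forall>y \<in> snd ` C. g y = g0 y + c * \<beta> y)))))"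
  proof (intro allI impI)
    fix v :: "real \<times> real \<Rightarrow> real"
    assume "\<exists>h g. portfolio_position C v h g"
    then obtain h g where hg: "portfolio_position C v h g" by blast
    obtain x0 y0 where p0: "(x0, y0) \<in> C" using comp_ne[OF comp] by blast
    obtain a b where anz: "\<And>x. a x \<noteq> 0" and bnz: "\<And>y. b y \<noteq> 0"
      and ab: "\<forall>(x, y) \<in> C. a x * b y = y - x" and a0: "a x0 = 1"
      using factor_exists[OF comp noid p0] by blast
    have bxy: "(y - x) / a x = b y" if "(x, y) \<in> C" for x y
      using ab that anz[of x] by (auto simp: field_simps)
    have vxy: "v (x, y) = h x * (y - x) + g y" if "(x, y) \<in> C" for x y
      using hg that unfolding portfolio_position_def by auto
    have fam: "portfolio_position C v (\<lambda>x. h x + c * (1 / a x)) (\<lambda>y. g y + c * (- b y))" for c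
      unfolding portfolio_position_def
    proof (clarify)
      fix x y assume xy: "(x, y) \<in> C"
      have "(h x + c * (1 / a x)) * (y - x) + (g y + c * - b y)
          = h x * (y - x) + g y + c * ((y - x) / a x - b y)" by (simp add: algebra_simps)
      then show "v (x, y) = (h x + c * (1 / a x)) * (y - x) + (g y + c * - b y)"
        using bxy[OF xy] vxy[OF xy] by simp
    qed
    show "(\<forall>(x, y) \<in> C. \<exists>h g h' g'. portfolio_position C v h g \<and> portfolio_position C v h' g' \<and>
                                   h x \<noteq> h' x \<and> g y \<noteq> g' y)
      \<and> (\<exists>h0 g0 \<alpha> \<beta> :: real \<Rightarrow> real.
           (\<forall>c. portfolio_position C v (\<lambda>x. h0 x + c * \<alpha> x) (\<lambda>y. g0 y + c * \<beta> y))
         \<and> (\<forall>h g. portfolio_position C v h g \<longrightarrow>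
              (\<exists>!c. (\<forall>x \<in> fst ` C. h x = h0 x + c * \<alpha> x) \<and> (\<forall>y \<in> snd ` C. g y = g0 y + c * \<beta> y))))"
    proof
      show "\<forall>(x, y) \<in> C. \<exists>h g h' g'. portfolio_position C v h g \<and> portfolio_position C v h' g' \<and>
                                   h x \<noteq> h' x \<and> g y \<noteq> g' y"
      proof (clarify)
        fix x y assume xy: "(x, y) \<in> C"
        have nh: "h x \<noteq> h x + 1 * (1 / a x)" using anz[of x] by simp
        have ng: "g y \<noteq> g y + 1 * (- b y)" using bnz[of y] by simp
        show "\<exists>h g h' g'. portfolio_position C v h g \<and> portfolio_position C v h' g' \<and>
                                   h x \<noteq> h' x \<and> g y \<noteq> g' y"
          apply (rule exI[of _ h], rule exI[of _ g], rule exI[of _ "\<lambda>x. h x + 1 * (1 / a x)"],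
              rule exI[of _ "\<lambda>y. g y + 1 * - b y"])
          using hg fam[of 1] nh ng by blast
      qed
    next
      show "\<exists>h0 g0 \<alpha> \<beta> :: real \<Rightarrow> real.
           (\<forall>c. portfolio_position C v (\<lambda>x. h0 x + c * \<alpha> x) (\<lambda>y. g0 y + c * \<beta> y))
         \<and> (\<forall>h g. portfolio_position C v h g \<longrightarrow>
              (\<exists>!c. (\<forall>x \<in> fst ` C. h x = h0 x + c * \<alpha> x) \<and> (\<forall>y \<in> snd ` C. g y = g0 y + c * \<beta> y)))"
      proof (intro exI conjI allI impI)
        show "portfolio_position C v (\<lambda>x. h x + c * (1 / a x)) (\<lambda>y. g y + c * (- b y))" for c
          by (rule fam)
      next
        fix h' g' assume hg': "portfolio_position C v h' g'"
        have v'xy: "v (x, y) = h' x * (y - x) + g' y" if "(x, y) \<in> C" for x y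
          using hg' that unfolding portfolio_position_def by auto
        define c where "c = h' x0 - h x0"
        have dxy: "(h' x - h x) * a x * b y = g y - g' y" if xy: "(x, y) \<in> C" for x y
        proof -
          have "(h' x - h x) * (y - x) = g y - g' y" using vxy[OF xy] v'xy[OF xy] by (simp add: algebra_simps)
          moreover have "y - x = a x * b y" using ab xy by auto
          ultimately show ?thesis by (simp add: mult.assoc)
        qed
        have Pc: "(h' x - h x) * a x = c" if "x \<in> fst ` C" for x
        proof (rule propagate[OF comp p0, where P = "\<lambda>x. (h' x - h x) * a x = c"])
          fix x x' y assume xy: "(x, y) \<in> C" and x'y: "(x', y) \<in> C" and P: "(h' x - h x) * a x = c"
          have "(h' x - h x) * a x * b y = (h' x' - h x') * a x' * b y" using dxy[OF xy] dxy[OF x'y] by simp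
          then show "(h' x' - h x') * a x' = c" using P bnz[of y] by simp
        qed (use a0 c_def that in auto)
        have hx: "h' x = h x + c * (1 / a x)" if "x \<in> fst ` C" for x
          using Pc[OF that] anz[of x] by (auto simp: field_simps)
        have gy: "g' y = g y + c * (- b y)" if yC: "y \<in> snd ` C" for y
        proof -
          obtain x where xy: "(x, y) \<in> C" using yC by force
          have "x \<in> fst ` C" using xy by force
          then show ?thesis using dxy[OF xy] Pc by fastforce
        qed
        have x0C: "x0 \<in> fst ` C" using p0 by force
        show "\<exists>!c. (\<forall>x \<in> fst ` C. h' x = h x + c * (1 / a x)) \<and> (\<forall>y \<in> snd ` C. g' y = g y + c * (- b y))"
        proof (rule ex1I[where a = c])
          show "(\<forall>x \<in> fst ` C. h' x = h x + c * (1 / a x)) \<and> (\<forall>y \<in> snd ` C. g' y = g y + c * (- b y))"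
            using hx gy by blast
        next
          fix c' assume "(\<forall>x \<in> fst ` C. h' x = h x + c' * (1 / a x)) \<and> (\<forall>y \<in> snd ` C. g' y = g y + c' * (- b y))"
          then have "h' x0 = h x0 + c' * (1 / a x0)" using x0C by blast
          then show "c' = c" using a0 c_def by simp
        qed
      qed
    qed
  qed
  have partB: "\<forall>x0 y0. (x0, y0) \<in> C \<longrightarrow>
        (\<exists>a b :: real \<Rightarrow> real. (\<forall>x. a x \<noteq> 0) \<and> (\<forall>y. b y \<noteq> 0) \<and>
            (\<forall>(x, y) \<in> C. a x * b y = y - x) \<and> a x0 = 1)
      \<and> (\<forall>a b a' b' :: real \<Rightarrow> real.
            (\<forall>x. a x \<noteq> 0) \<and> (\<forall>y. b y \<noteq> 0) \<and> (\<forall>(x, y) \<in> C. a x * b y = y - x) \<and> a x0 = 1 \<and>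
            (\<forall>x. a' x \<noteq> 0) \<and> (\<forall>y. b' y \<noteq> 0) \<and> (\<forall>(x, y) \<in> C. a' x * b' y = y - x) \<and> a' x0 = 1
            \<longrightarrow> (\<forall>x \<in> fst ` C. a' x = a x) \<and> (\<forall>y \<in> snd ` C. b' y = b y))
      \<and> (\<forall>(a :: real \<Rightarrow> real) (b :: real \<Rightarrow> real) (hn :: nat \<Rightarrow> real \<Rightarrow> real) (gn :: nat \<Rightarrow> real \<Rightarrow> real)
            (v :: real \<times> real \<Rightarrow> real).
            (\<forall>x. a x \<noteq> 0) \<and> (\<forall>y. b y \<noteq> 0) \<and> (\<forall>(x, y) \<in> C. a x * b y = y - x) \<and> a x0 = 1 \<and>
            (\<forall>(x, y) \<in> C. (\<lambda>n. hn n x * (y - x) + gn n y) \<longlonglongrightarrow> v (x, y))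
            \<longrightarrow> (let h'n = (\<lambda>n x. hn n x - hn n x0 / a x);
                     g'n = (\<lambda>n y. gn n y + hn n x0 * b y)
                 in (\<forall>n. \<forall>(x, y) \<in> C. hn n x * (y - x) + gn n y = h'n n x * (y - x) + g'n n y)
                  \<and> (\<exists>h' g' :: real \<Rightarrow> real.
                        (\<forall>x \<in> fst ` C. (\<lambda>n. h'n n x) \<longlonglongrightarrow> h' x)
                      \<and> (\<forall>y \<in> snd ` C. (\<lambda>n. g'n n y) \<longlonglongrightarrow> g' y)
                      \<and> portfolio_position C v h' g')))"
  proof (intro allI impI)
    fix x0 y0 assume p0: "(x0, y0) \<in> C"
    have B1: "\<exists>a b :: real \<Rightarrow> real. (\<forall>x. a x \<noteq> 0) \<and> (\<forall>y. b y \<noteq> 0) \<and>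
            (\<forall>(x, y) \<in> C. a x * b y = y - x) \<and> a x0 = 1"
      using factor_exists[OF comp noid p0] .
    have B2: "\<forall>a b a' b' :: real \<Rightarrow> real.
            (\<forall>x. a x \<noteq> 0) \<and> (\<forall>y. b y \<noteq> 0) \<and> (\<forall>(x, y) \<in> C. a x * b y = y - x) \<and> a x0 = 1 \<and>
            (\<forall>x. a' x \<noteq> 0) \<and> (\<forall>y. b' y \<noteq> 0) \<and> (\<forall>(x, y) \<in> C. a' x * b' y = y - x) \<and> a' x0 = 1
            \<longrightarrow> (\<forall>x \<in> fst ` C. a' x = a x) \<and> (\<forall>y \<in> snd ` C. b' y = b y)"
    proof (intro allI impI)
      fix a b a' b' :: "real \<Rightarrow> real"
      assume H: "(\<forall>x. a x \<noteq> 0) \<and> (\<forall>y. b y \<noteq> 0) \<and> (\<forall>(x, y) \<in> C. a x * b y = y - x) \<and> a x0 = 1 \<and>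
            (\<forall>x. a' x \<noteq> 0) \<and> (\<forall>y. b' y \<noteq> 0) \<and> (\<forall>(x, y) \<in> C. a' x * b' y = y - x) \<and> a' x0 = 1"
      then have anz: "\<And>x. a x \<noteq> 0" and bnz: "\<And>y. b y \<noteq> 0"
        and ab: "\<And>x y. (x, y) \<in> C \<Longrightarrow> a x * b y = y - x" and a0: "a x0 = 1"
        and anz': "\<And>x. a' x \<noteq> 0" and bnz': "\<And>y. b' y \<noteq> 0"
        and ab': "\<And>x y. (x, y) \<in> C \<Longrightarrow> a' x * b' y = y - x" and a0': "a' x0 = 1"
        by auto
      have bb: "b' y = b y" if xy: "(x, y) \<in> C" and e: "a' x = a x" for x y
      proof -
        have "a x * b' y = a x * b y" using ab[OF xy] ab'[OF xy] e by simp
        then show ?thesis using anz[of x] by simp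
      qed
      have aa: "a' x = a x" if "x \<in> fst ` C" for x
      proof (rule propagate[OF comp p0, where P = "\<lambda>x. a' x = a x"])
        fix x x' y assume xy: "(x, y) \<in> C" and x'y: "(x', y) \<in> C" and P: "a' x = a x"
        have "a' x' * b y = a x' * b y" using ab[OF x'y] ab'[OF x'y] bb[OF xy P] by simp
        then show "a' x' = a x'" using bnz[of y] by simp
      qed (use a0 a0' that in auto)
      show "(\<forall>x \<in> fst ` C. a' x = a x) \<and> (\<forall>y \<in> snd ` C. b' y = b y)"
      proof (intro conjI ballI)
        fix y assume "y \<in> snd ` C"
        then obtain x where xy: "(x, y) \<in> C" by force
        then have "x \<in> fst ` C" by force
        then show "b' y = b y" using bb[OF xy] aa by blast
      qed (rule aa)
    qed
    have B3: "\<forall>(a :: real \<Rightarrow> real) (b :: real \<Rightarrow> real) (hn :: nat \<Rightarrow> real \<Rightarrow> real) (gn :: nat \<Rightarrow> real \<Rightarrow> real)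
            (v :: real \<times> real \<Rightarrow> real).
            (\<forall>x. a x \<noteq> 0) \<and> (\<forall>y. b y \<noteq> 0) \<and> (\<forall>(x, y) \<in> C. a x * b y = y - x) \<and> a x0 = 1 \<and>
            (\<forall>(x, y) \<in> C. (\<lambda>n. hn n x * (y - x) + gn n y) \<longlonglongrightarrow> v (x, y))
            \<longrightarrow> (let h'n = (\<lambda>n x. hn n x - hn n x0 / a x);
                     g'n = (\<lambda>n y. gn n y + hn n x0 * b y)
                 in (\<forall>n. \<forall>(x, y) \<in> C. hn n x * (y - x) + gn n y = h'n n x * (y - x) + g'n n y)
                  \<and> (\<exists>h' g' :: real \<Rightarrow> real.
                        (\<forall>x \<in> fst ` C. (\<lambda>n. h'n n x) \<longlonglongrightarrow> h' x)
                      \<and> (\<forall>y \<in> snd ` C. (\<lambda>n. g'n n y) \<longlonglongrightarrow> g' y)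
                      \<and> portfolio_position C v h' g'))"
    proof (intro allI impI)
      fix a b :: "real \<Rightarrow> real" and hn gn :: "nat \<Rightarrow> real \<Rightarrow> real" and v :: "real \<times> real \<Rightarrow> real"
      assume H: "(\<forall>x. a x \<noteq> 0) \<and> (\<forall>y. b y \<noteq> 0) \<and> (\<forall>(x, y) \<in> C. a x * b y = y - x) \<and> a x0 = 1 \<and>
            (\<forall>(x, y) \<in> C. (\<lambda>n. hn n x * (y - x) + gn n y) \<longlonglongrightarrow> v (x, y))"
      then have anz: "\<And>x. a x \<noteq> 0" and bnz: "\<And>y. b y \<noteq> 0"
        and ab: "\<And>x y. (x, y) \<in> C \<Longrightarrow> a x * b y = y - x" and a0: "a x0 = 1"
        and lim: "\<And>x y. (x, y) \<in> C \<Longrightarrow> (\<lambda>n. hn n x * (y - x) + gn n y) \<longlonglongrightarrow> v (x, y)"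
        by auto
      define H' where "H' = (\<lambda>n x. hn n x - hn n x0 / a x)"
      define G' where "G' = (\<lambda>n y. gn n y + hn n x0 * b y)"
      have ident: "hn n x * (y - x) + gn n y = H' n x * (y - x) + G' n y" if xy: "(x, y) \<in> C" for n x y
      proof -
        have "(y - x) / a x = b y" using ab[OF xy] anz[of x] by (auto simp: field_simps)
        then have "hn n x0 / a x * (y - x) = hn n x0 * b y" by (metis times_divide_eq_left times_divide_eq_right)
        then show ?thesis unfolding H'_def G'_def by (simp add: algebra_simps)
      qed
      have lim': "(\<lambda>n. H' n x * (y - x) + G' n y) \<longlonglongrightarrow> v (x, y)" if xy: "(x, y) \<in> C" for x y
        using lim[OF xy] ident[OF xy] by simp
      have convH: "convergent (\<lambda>n. H' n x)" if "x \<in> fst ` C" for x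
      proof (rule propagate[OF comp p0, where P = "\<lambda>x. convergent (\<lambda>n. H' n x)"])
        fix x x' y assume xy: "(x, y) \<in> C" and x'y: "(x', y) \<in> C" and P: "convergent (\<lambda>n. H' n x)"
        have ne: "y - x' \<noteq> 0" using x'y offd by fastforce
        have eq: "H' n x' = ((H' n x' * (y - x') + G' n y) - (H' n x * (y - x) + G' n y) + H' n x * (y - x)) / (y - x')" for n
          using ne by (simp add: field_simps)
        have "(\<lambda>n. ((H' n x' * (y - x') + G' n y) - (H' n x * (y - x) + G' n y) + H' n x * (y - x)) / (y - x'))
             \<longlonglongrightarrow> ((v (x', y) - v (x, y) + lim (\<lambda>n. H' n x) * (y - x)) / (y - x'))"
          using lim'[OF xy] lim'[OF x'y] P[unfolded convergent_LIMSEQ_iff] ne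
          by (intro tendsto_intros) auto
        then show "convergent (\<lambda>n. H' n x')" unfolding convergent_def eq[symmetric] by blast
      next
        show "convergent (\<lambda>n. H' n x0)" unfolding H'_def using a0 by (simp add: convergent_const)
      qed (use that in auto)
      define h' where "h' x = lim (\<lambda>n. H' n x)" for x
      have limH: "(\<lambda>n. H' n x) \<longlonglongrightarrow> h' x" if "x \<in> fst ` C" for x
        using convH[OF that] unfolding h'_def convergent_LIMSEQ_iff .
      have convG: "convergent (\<lambda>n. G' n y)" if yC: "y \<in> snd ` C" for y
      proof -
        obtain x where xy: "(x, y) \<in> C" using yC by force
        have xC: "x \<in> fst ` C" using xy by force
        have "(\<lambda>n. (H' n x * (y - x) + G' n y) - H' n x * (y - x)) \<longlonglongrightarrow> v (x, y) - h' x * (y - x)"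
          using lim'[OF xy] limH[OF xC] by (intro tendsto_intros) auto
        then show ?thesis unfolding convergent_def by auto
      qed
      define g' where "g' y = lim (\<lambda>n. G' n y)" for y
      have limG: "(\<lambda>n. G' n y) \<longlonglongrightarrow> g' y" if "y \<in> snd ` C" for y
        using convG[OF that] unfolding g'_def convergent_LIMSEQ_iff .
      have pp: "portfolio_position C v h' g'"
        unfolding portfolio_position_def
      proof (clarify)
        fix x y assume xy: "(x, y) \<in> C"
        have xC: "x \<in> fst ` C" and yC: "y \<in> snd ` C" using xy by force+
        have "(\<lambda>n. H' n x * (y - x) + G' n y) \<longlonglongrightarrow> h' x * (y - x) + g' y"
          using limH[OF xC] limG[OF yC] by (intro tendsto_intros)
        then show "v (x, y) = h' x * (y - x) + g' y" using lim'[OF xy] LIMSEQ_unique by blast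
      qed
      show "let h'n = (\<lambda>n x. hn n x - hn n x0 / a x);
                     g'n = (\<lambda>n y. gn n y + hn n x0 * b y)
                 in (\<forall>n. \<forall>(x, y) \<in> C. hn n x * (y - x) + gn n y = h'n n x * (y - x) + g'n n y)
                  \<and> (\<exists>h' g' :: real \<Rightarrow> real.
                        (\<forall>x \<in> fst ` C. (\<lambda>n. h'n n x) \<longlonglongrightarrow> h' x)
                      \<and> (\<forall>y \<in> snd ` C. (\<lambda>n. g'n n y) \<longlonglongrightarrow> g' y)
                      \<and> portfolio_position C v h' g')"
        unfolding Let_def H'_def[symmetric] G'_def[symmetric]
        using ident limH limG pp by blast
    qed
    show "(\<exists>a b :: real \<Rightarrow> real. (\<forall>x. a x \<noteq> 0) \<and> (\<forall>y. b y \<noteq> 0) \<and>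
            (\<forall>(x, y) \<in> C. a x * b y = y - x) \<and> a x0 = 1)
      \<and> (\<forall>a b a' b' :: real \<Rightarrow> real.
            (\<forall>x. a x \<noteq> 0) \<and> (\<forall>y. b y \<noteq> 0) \<and> (\<forall>(x, y) \<in> C. a x * b y = y - x) \<and> a x0 = 1 \<and>
            (\<forall>x. a' x \<noteq> 0) \<and> (\<forall>y. b' y \<noteq> 0) \<and> (\<forall>(x, y) \<in> C. a' x * b' y = y - x) \<and> a' x0 = 1
            \<longrightarrow> (\<forall>x \<in> fst ` C. a' x = a x) \<and> (\<forall>y \<in> snd ` C. b' y = b y))
      \<and> (\<forall>(a :: real \<Rightarrow> real) (b :: real \<Rightarrow> real) (hn :: nat \<Rightarrow> real \<Rightarrow> real) (gn :: nat \<Rightarrow> real \<Rightarrow> real)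
            (v :: real \<times> real \<Rightarrow> real).
            (\<forall>x. a x \<noteq> 0) \<and> (\<forall>y. b y \<noteq> 0) \<and> (\<forall>(x, y) \<in> C. a x * b y = y - x) \<and> a x0 = 1 \<and>
            (\<forall>(x, y) \<in> C. (\<lambda>n. hn n x * (y - x) + gn n y) \<longlonglongrightarrow> v (x, y))
            \<longrightarrow> (let h'n = (\<lambda>n x. hn n x - hn n x0 / a x);
                     g'n = (\<lambda>n y. gn n y + hn n x0 * b y)
                 in (\<forall>n. \<forall>(x, y) \<in> C. hn n x * (y - x) + gn n y = h'n n x * (y - x) + g'n n y)
                  \<and> (\<exists>h' g' :: real \<Rightarrow> real.
                        (\<forall>x \<in> fst ` C. (\<lambda>n. h'n n x) \<longlonglongrightarrow> h' x)
                      \<and> (\<forall>y \<in> snd ` C. (\<lambda>n. g'n n y) \<longlonglongrightarrow> g' y)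
                      \<and> portfolio_position C v h' g')))"
      using B1 B2 B3 by blast
  qed
  show ?thesis using partA partB by blast
qed

end
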